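(* In the setting described in the context, the set $\{\ell_{xy}\mid x,y\in V\}$ spans the whole space $V^*$. Moreover, if $a\in V$ is such that either $\ell_{ax}=0$ for all $x\in V$ or $\ell_{xa}=0$ for all $x\in V$, then $a=0$.
   Context: Let $V$ be a $3$-dimensional vector space over a field $k$ and $\zeta\in GL(V)$. Write $xy$ for $x\otimes y$ in $T(V)$. Put $x\barwedge y=\zeta(x)y-\zeta(y)x$ and $x\barwedge y\barwedge z=\zeta^2(x)\zeta(y)z+\zeta^2(y)\zeta(z)x+\zeta^2(z)\zeta(x)y-\zeta^2(x)\zeta(z)y-\zeta^2(y)\zeta(x)z-\zeta^2(z)\zeta(y)x$. Let $I_2=\mathrm{span}\{x\barwedge y\}\subset V^{\otimes 2}$ and $\Upsilon^{(3)}=(I_2\otimes V)\cap(V\otimes I_2)=\mathrm{span}\{x\barwedge y\barwedge z\}$ (one-dimensional). Via the isomorphisms $\bigwedge^2V\cong I_2$, $x\wedge y\mapsto x\barwedge y$, and $\bigwedge^3V\cong\Upsilon^{(3)}$, $x\wedge y\wedge z\mapsto x\barwedge y\barwedge z$, there is a bilinear product $x\barwedge w\in\Upsilon^{(3)}$ for $x\in V$, $w\in I_2$, with $x\barwedge(y\barwedge z)=x\barwedge y\barwedge z$. Let $R$ be a Hecke symmetry on $V$ with parameter $q\neq0$ (braid equation and $(R-q\,\mathrm{Id})(R+\mathrm{Id})=0$) such that $\mathrm{Im}(R-q\,\mathrm{Id})=I_2$ (i.e. $\mathbb{S}(V,R)=T(V)/(I_2)$). Put $Y=q\,\mathrm{Id}-R$.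 Fix a nonzero alternating trilinear form $\omega$ on $V$, let $\tilde\omega:\Upsilon^{(3)}\to k$ be the linear map with $\tilde\omega(x\barwedge y\barwedge z)=\omega(x,y,z)$, and define $\ell_{xy}\in V^*$ by $\ell_{xy}(z)=\tilde\omega\big(x\barwedge Y(\zeta(y)z)\big)$. *)

theory Defs
  imports Main "HOL-Library.Numeral_Type" "HOL-Library.Function_Algebras"
begin

text \<open>Coordinate model: V = k^3 is the space of functions 3 => k (3 the three-element type);
  V (x) V is the space of functions 3 x 3 => k, V (x) V (x) V that of functions 3 x 3 x 3 => k.\<close>

type_synonym 'k vec3 = "3 \<Rightarrow> 'k"
type_synonym 'k ten2 = "3 \<times> 3 \<Rightarrow> 'k"
type_synonym 'k ten3 = "3 \<times> 3 \<times> 3 \<Rightarrow> 'k"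

definition scal :: "'k::times \<Rightarrow> ('i \<Rightarrow> 'k) \<Rightarrow> ('i \<Rightarrow> 'k)" where
  "scal c f = (\<lambda>i. c * f i)"

definition klin :: "(('i \<Rightarrow> 'k::field) \<Rightarrow> ('j \<Rightarrow> 'k)) \<Rightarrow> bool" where
  "klin f \<longleftrightarrow> (\<forall>x y. f (x + y) = f x + f y) \<and> (\<forall>c x. f (scal c x) = scal c (f x))"

definition lin_form :: "(('i \<Rightarrow> 'k::field) \<Rightarrow> 'k) \<Rightarrow> bool" where
  "lin_form f \<longleftrightarrow> (\<forall>x y. f (x + y) = f x + f y) \<and> (\<forall>c x. f (scal c x) = c * f x)"

definition tens2 :: "'k::field vec3 \<Rightarrow> 'k vec3 \<Rightarrow> 'k ten2" where
  "tens2 x y = (\<lambda>(i, j). x i * y j)"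

definition tens3 :: "'k::field vec3 \<Rightarrow> 'k vec3 \<Rightarrow> 'k vec3 \<Rightarrow> 'k ten3" where
  "tens3 x y z = (\<lambda>(i, j, m). x i * y j * z m)"

definition bw2 :: "('k::field vec3 \<Rightarrow> 'k vec3) \<Rightarrow> 'k vec3 \<Rightarrow> 'k vec3 \<Rightarrow> 'k ten2" where
  "bw2 \<zeta> x y = tens2 (\<zeta> x) y - tens2 (\<zeta> y) x"

definition bw3 :: "('k::field vec3 \<Rightarrow> 'k vec3) \<Rightarrow> 'k vec3 \<Rightarrow> 'k vec3 \<Rightarrow> 'k vec3 \<Rightarrow> 'k ten3" where
  "bw3 \<zeta> x y z =
     tens3 (\<zeta> (\<zeta> x)) (\<zeta> y) z + tens3 (\<zeta> (\<zeta> y)) (\<zeta> z) x + tens3 (\<zeta> (\<zeta> z)) (\<zeta> x) y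
   - tens3 (\<zeta> (\<zeta> x)) (\<zeta> z) y - tens3 (\<zeta> (\<zeta> y)) (\<zeta> x) z - tens3 (\<zeta> (\<zeta> z)) (\<zeta> y) x"

definition I2 :: "('k::field vec3 \<Rightarrow> 'k vec3) \<Rightarrow> 'k ten2 set" where
  "I2 \<zeta> = {w. \<exists>S c. finite S \<and> w = (\<Sum>p\<in>S. scal (c p) (bw2 \<zeta> (fst p) (snd p)))}"

text \<open>The bilinear product x barwedge w for w in I_2, determined by linearity in w and
  x barwedge (y barwedge z) = x barwedge y barwedge z (well defined via the isomorphisms
  Lambda^2 V = I_2, Lambda^3 V = Upsilon^(3)).\<close>
definition wprod :: "('k::field vec3 \<Rightarrow> 'k vec3) \<Rightarrow> 'k vec3 \<Rightarrow> 'k ten2 \<Rightarrow> 'k ten3" where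
  "wprod \<zeta> x w = (THE u. \<exists>S c. finite S
       \<and> w = (\<Sum>p\<in>S. scal (c p) (bw2 \<zeta> (fst p) (snd p)))
       \<and> u = (\<Sum>p\<in>S. scal (c p) (bw3 \<zeta> x (fst p) (snd p))))"

definition omega_tilde :: "('k::field vec3 \<Rightarrow> 'k vec3) \<Rightarrow> ('k vec3 \<Rightarrow> 'k vec3 \<Rightarrow> 'k vec3 \<Rightarrow> 'k)
     \<Rightarrow> 'k ten3 \<Rightarrow> 'k" where
  "omega_tilde \<zeta> \<omega> u = (THE t. \<exists>S c. finite S
       \<and> u = (\<Sum>p\<in>S. scal (c p) (bw3 \<zeta> (fst p) (fst (snd p)) (snd (snd p))))
       \<and> t = (\<Sum>p\<in>S. c p * \<omega> (fst p) (fst (snd p)) (snd (snd p))))"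

text \<open>R (x) Id and Id (x) R on V (x) V (x) V.\<close>
definition R12 :: "('k ten2 \<Rightarrow> 'k ten2) \<Rightarrow> 'k ten3 \<Rightarrow> 'k ten3" where
  "R12 R U = (\<lambda>(i, j, m). R (\<lambda>(k, l). U (k, l, m)) (i, j))"

definition R23 :: "('k ten2 \<Rightarrow> 'k ten2) \<Rightarrow> 'k ten3 \<Rightarrow> 'k ten3" where
  "R23 R U = (\<lambda>(i, j, m). R (\<lambda>(k, l). U (i, k, l)) (j, m))"

definition hecke :: "'k::field \<Rightarrow> ('k ten2 \<Rightarrow> 'k ten2) \<Rightarrow> bool" where
  "hecke q R \<longleftrightarrow> klin R
     \<and> (\<forall>U. R12 R (R23 R (R12 R U)) = R23 R (R12 R (R23 R U)))
     \<and> (\<forall>T. R (R T + T) - scal q (R T + T) = 0)"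

definition Ymap :: "'k::field \<Rightarrow> ('k ten2 \<Rightarrow> 'k ten2) \<Rightarrow> 'k ten2 \<Rightarrow> 'k ten2" where
  "Ymap q R T = scal q T - R T"

definition alt_trilinear :: "('k::field vec3 \<Rightarrow> 'k vec3 \<Rightarrow> 'k vec3 \<Rightarrow> 'k) \<Rightarrow> bool" where
  "alt_trilinear \<omega> \<longleftrightarrow>
     (\<forall>y z. lin_form (\<lambda>x. \<omega> x y z)) \<and> (\<forall>x z. lin_form (\<lambda>y. \<omega> x y z))
     \<and> (\<forall>x y. lin_form (\<lambda>z. \<omega> x y z))
     \<and> (\<forall>x z. \<omega> x x z = 0) \<and> (\<forall>x y. \<omega> x y x = 0) \<and> (\<forall>x y. \<omega> x y y = 0)"

definition ell :: "('k::field vec3 \<Rightarrow> 'k vec3) \<Rightarrow> 'k \<Rightarrow> ('k ten2 \<Rightarrow> 'k ten2)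
     \<Rightarrow> ('k vec3 \<Rightarrow> 'k vec3 \<Rightarrow> 'k vec3 \<Rightarrow> 'k) \<Rightarrow> 'k vec3 \<Rightarrow> 'k vec3 \<Rightarrow> 'k vec3 \<Rightarrow> 'k" where
  "ell \<zeta> q R \<omega> x y = (\<lambda>z. omega_tilde \<zeta> \<omega> (wprod \<zeta> x (Ymap q R (tens2 (\<zeta> y) z))))"

end

theory Submission
  imports Defs "HOL.Vector_Spaces"
begin


lemma exhaust3: fixes x :: 3 shows "x = 0 \<or> x = 1 \<or> x = 2"
proof (induct x)
  case (of_int z)
  then have "z = 0 \<or> z = 1 \<or> z = 2" by fastforce
  then show ?case by auto
qed

lemma UNIV3: "(UNIV :: 3 set) = {0,1,2}" using exhaust3 by auto

lemma scal_apply: "scal c f i = c * f i" by (simp add: scal_def)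

lemma klin_add: "klin f \<Longrightarrow> f (x + y) = f x + f y" by (simp add: klin_def)
lemma klin_scal: "klin f \<Longrightarrow> f (scal c x) = scal c (f x)" by (simp add: klin_def)
lemma klin_zero: "klin f \<Longrightarrow> f 0 = 0"
proof -
  assume "klin f" then have "f 0 = f 0 + f 0" using klin_add[of f 0 0] by simp
  then show ?thesis by simp
qed
lemma klin_neg: "klin (f::('i \<Rightarrow> 'k::field) \<Rightarrow> ('j \<Rightarrow> 'k)) \<Longrightarrow> f (- x) = - f x"
proof -
  assume a: "klin f"
  have "- x = scal (-1) x" by (auto simp: fun_eq_iff scal_apply)
  then have "f (- x) = scal (-1) (f x)" using klin_scal[OF a] by simp
  then show ?thesis by (auto simp: fun_eq_iff scal_apply)
qed
lemma klin_diff: "klin (f::('i \<Rightarrow> 'k::field) \<Rightarrow> ('j \<Rightarrow> 'k)) \<Longrightarrow> f (x - y) = f x - f y"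
  using klin_add[of f x "-y"] klin_neg[of f y] by simp
lemma klin_sum: "klin (f::('i \<Rightarrow> 'k::field) \<Rightarrow> ('j \<Rightarrow> 'k)) \<Longrightarrow> f (\<Sum>p\<in>S. g p) = (\<Sum>p\<in>S. f (g p))"
  by (induct S rule: infinite_finite_induct) (auto simp: klin_zero klin_add)
lemma klin_sum_scal: "klin (f::('i \<Rightarrow> 'k::field) \<Rightarrow> ('j \<Rightarrow> 'k)) \<Longrightarrow>
   f (\<Sum>p\<in>S. scal (c p) (g p)) = (\<Sum>p\<in>S. scal (c p) (f (g p)))"
  by (simp add: klin_sum klin_scal)

lemma lf_add: "lin_form f \<Longrightarrow> f (x + y) = f x + f y" by (simp add: lin_form_def)
lemma lf_scal: "lin_form f \<Longrightarrow> f (scal c x) = c * f x" by (simp add: lin_form_def)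
lemma lf_zero: "lin_form f \<Longrightarrow> f 0 = 0"
proof -
  assume "lin_form f" then have "f 0 = f 0 + f 0" using lf_add[of f 0 0] by simp
  then show ?thesis by (metis add_cancel_left_right)
qed
lemma lf_neg: "lin_form (f::('i \<Rightarrow> 'k::field) \<Rightarrow> 'k) \<Longrightarrow> f (- x) = - f x"
proof -
  assume a: "lin_form f"
  have "- x = scal (-1) x" by (auto simp: fun_eq_iff scal_apply)
  then show ?thesis using lf_scal[OF a, of "-1" x] by simp
qed
lemma lf_diff: "lin_form (f::('i \<Rightarrow> 'k::field) \<Rightarrow> 'k) \<Longrightarrow> f (x - y) = f x - f y"
  using lf_add[of f x "-y"] lf_neg[of f y] by simp
lemma lf_sum: "lin_form (f::('i \<Rightarrow> 'k::field) \<Rightarrow> 'k) \<Longrightarrow> f (\<Sum>p\<in>S. g p) = (\<Sum>p\<in>S. f (g p))"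
  by (induct S rule: infinite_finite_induct) (auto simp: lf_zero lf_add)
lemma lf_sum_scal: "lin_form (f::('i \<Rightarrow> 'k::field) \<Rightarrow> 'k) \<Longrightarrow>
   f (\<Sum>p\<in>S. scal (c p) (g p)) = (\<Sum>p\<in>S. c p * f (g p))"
  by (simp add: lf_sum lf_scal)

lemma lf_comp: "klin g \<Longrightarrow> lin_form f \<Longrightarrow> lin_form (\<lambda>x. f (g x))"
  by (simp add: lin_form_def klin_def)
lemma klin_comp: "klin g \<Longrightarrow> klin f \<Longrightarrow> klin (\<lambda>x. f (g x))"
  by (simp add: klin_def)

definition e3 :: "3 \<Rightarrow> 'k::field vec3" where "e3 a = (\<lambda>i. if i = a then 1 else 0)"

lemma vec_expand: "(x :: 'k::field vec3) = scal (x 0) (e3 0) + scal (x 1) (e3 1) + scal (x 2) (e3 2)"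
proof
  fix i :: 3 show "x i = (scal (x 0) (e3 0) + scal (x 1) (e3 1) + scal (x 2) (e3 2)) i"
    using exhaust3[of i] by (auto simp: e3_def scal_apply)
qed

lemma lf_expand: "lin_form f \<Longrightarrow> f (x :: 'k::field vec3) = x 0 * f (e3 0) + x 1 * f (e3 1) + x 2 * f (e3 2)"
  using arg_cong[OF vec_expand[of x], of f] by (simp add: lf_add lf_scal)

lemma klin_expand: "klin f \<Longrightarrow> f (x :: 'k::field vec3) = scal (x 0) (f (e3 0)) + scal (x 1) (f (e3 1)) + scal (x 2) (f (e3 2))"
  using arg_cong[OF vec_expand[of x], of f] by (simp add: klin_add klin_scal fun_eq_iff)

definition S1 :: "('k::field vec3 \<Rightarrow> 'k vec3) \<Rightarrow> 'k ten2 \<Rightarrow> 'k ten2" where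
  "S1 f w = (\<lambda>(i,j). f (\<lambda>k. w (k,j)) i)"
definition S2 :: "('k::field vec3 \<Rightarrow> 'k vec3) \<Rightarrow> 'k ten2 \<Rightarrow> 'k ten2" where
  "S2 f w = (\<lambda>(i,j). f (\<lambda>k. w (i,k)) j)"
definition T1 :: "('k::field vec3 \<Rightarrow> 'k vec3) \<Rightarrow> 'k ten3 \<Rightarrow> 'k ten3" where
  "T1 f u = (\<lambda>(i,j,m). f (\<lambda>k. u (k,j,m)) i)"
definition T2 :: "('k::field vec3 \<Rightarrow> 'k vec3) \<Rightarrow> 'k ten3 \<Rightarrow> 'k ten3" where
  "T2 f u = (\<lambda>(i,j,m). f (\<lambda>k. u (i,k,m)) j)"

lemma S1_tens: assumes "klin f" shows "S1 f (tens2 a b) = tens2 (f a) b"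
proof -
  have "S1 f (tens2 a b) = (\<lambda>(i,j). f (scal (b j) a) i)" unfolding S1_def tens2_def scal_def by (simp add: mult.commute)
  then show ?thesis by (simp add: klin_scal[OF assms] scal_apply tens2_def fun_eq_iff mult.commute)
qed
lemma S2_tens: assumes "klin f" shows "S2 f (tens2 a b) = tens2 a (f b)"
proof -
  have "S2 f (tens2 a b) = (\<lambda>(i,j). f (scal (a i) b) j)" unfolding S2_def tens2_def scal_def by (simp add: mult.commute)
  then show ?thesis by (simp add: klin_scal[OF assms] scal_apply tens2_def fun_eq_iff mult.commute)
qed
lemma T1_tens: assumes "klin f" shows "T1 f (tens3 a b c) = tens3 (f a) b c"
proof -
  have "T1 f (tens3 a b c) = (\<lambda>(i,j,m). f (scal (b j * c m) a) i)" unfolding T1_def tens3_def scal_def by (simp add: ac_simps)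
  then show ?thesis by (simp add: klin_scal[OF assms] scal_apply tens3_def fun_eq_iff ac_simps)
qed
lemma T2_tens: assumes "klin f" shows "T2 f (tens3 a b c) = tens3 a (f b) c"
proof -
  have "T2 f (tens3 a b c) = (\<lambda>(i,j,m). f (scal (a i * c m) b) j)" unfolding T2_def tens3_def scal_def by (simp add: ac_simps)
  then show ?thesis by (simp add: klin_scal[OF assms] scal_apply tens3_def fun_eq_iff ac_simps)
qed

lemma S1_klin: assumes "klin f" shows "klin (S1 f)"
  unfolding klin_def
proof (intro conjI allI)
  fix x y :: "'a ten2"
  have a: "f (\<lambda>k. x (k, j) + y (k, j)) = f (\<lambda>k. x (k,j)) + f (\<lambda>k. y (k,j))" for j
    using klin_add[OF assms, of "\<lambda>k. x (k,j)" "\<lambda>k. y (k,j)"] by (simp add: plus_fun_def)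
  show "S1 f (x + y) = S1 f x + S1 f y"
    by (auto simp: S1_def fun_eq_iff a klin_add[OF assms])
next
  fix c and x :: "'a ten2"
  have s: "f (\<lambda>k. c * x (k, j)) = scal c (f (\<lambda>k. x (k,j)))" for j
    using klin_scal[OF assms, of c "\<lambda>k. x (k,j)"] by (simp add: scal_def)
  show "S1 f (scal c x) = scal c (S1 f x)"
    by (auto simp: S1_def fun_eq_iff s klin_scal[OF assms] scal_apply)
qed
lemma S2_klin: assumes "klin f" shows "klin (S2 f)"
  unfolding klin_def
proof (intro conjI allI)
  fix x y :: "'a ten2"
  have a: "f (\<lambda>k. x (j, k) + y (j, k)) = f (\<lambda>k. x (j,k)) + f (\<lambda>k. y (j,k))" for j
    using klin_add[OF assms, of "\<lambda>k. x (j,k)" "\<lambda>k. y (j,k)"] by (simp add: plus_fun_def)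
  show "S2 f (x + y) = S2 f x + S2 f y"
    by (auto simp: S2_def fun_eq_iff a klin_add[OF assms])
next
  fix c and x :: "'a ten2"
  have s: "f (\<lambda>k. c * x (j, k)) = scal c (f (\<lambda>k. x (j,k)))" for j
    using klin_scal[OF assms, of c "\<lambda>k. x (j,k)"] by (simp add: scal_def)
  show "S2 f (scal c x) = scal c (S2 f x)"
    by (auto simp: S2_def fun_eq_iff s klin_scal[OF assms] scal_apply)
qed
lemma T1_klin: assumes "klin f" shows "klin (T1 f)"
  unfolding klin_def
proof (intro conjI allI)
  fix x y :: "'a ten3"
  have a: "f (\<lambda>k. x (k, j, m) + y (k, j, m)) = f (\<lambda>k. x (k,j,m)) + f (\<lambda>k. y (k,j,m))" for j m
    using klin_add[OF assms, of "\<lambda>k. x (k,j,m)" "\<lambda>k. y (k,j,m)"] by (simp add: plus_fun_def)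
  show "T1 f (x + y) = T1 f x + T1 f y"
    by (auto simp: T1_def fun_eq_iff a klin_add[OF assms])
next
  fix c and x :: "'a ten3"
  have s: "f (\<lambda>k. c * x (k, j, m)) = scal c (f (\<lambda>k. x (k,j,m)))" for j m
    using klin_scal[OF assms, of c "\<lambda>k. x (k,j,m)"] by (simp add: scal_def)
  show "T1 f (scal c x) = scal c (T1 f x)"
    by (auto simp: T1_def fun_eq_iff s klin_scal[OF assms] scal_apply)
qed
lemma T2_klin: assumes "klin f" shows "klin (T2 f)"
  unfolding klin_def
proof (intro conjI allI)
  fix x y :: "'a ten3"
  have a: "f (\<lambda>k. x (j, k, m) + y (j, k, m)) = f (\<lambda>k. x (j,k,m)) + f (\<lambda>k. y (j,k,m))" for j m
    using klin_add[OF assms, of "\<lambda>k. x (j,k,m)" "\<lambda>k. y (j,k,m)"] by (simp add: plus_fun_def)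
  show "T2 f (x + y) = T2 f x + T2 f y"
    by (auto simp: T2_def fun_eq_iff a klin_add[OF assms])
next
  fix c and x :: "'a ten3"
  have s: "f (\<lambda>k. c * x (j, k, m)) = scal c (f (\<lambda>k. x (j,k,m)))" for j m
    using klin_scal[OF assms, of c "\<lambda>k. x (j,k,m)"] by (simp add: scal_def)
  show "T2 f (scal c x) = scal c (T2 f x)"
    by (auto simp: T2_def fun_eq_iff s klin_scal[OF assms] scal_apply)
qed

lemma S1_comp: "S1 f (S1 g w) = S1 (\<lambda>x. f (g x)) w"
  by (auto simp: S1_def fun_eq_iff)



definition Lx :: "('k::field vec3 \<Rightarrow> 'k vec3) \<Rightarrow> 'k vec3 \<Rightarrow> 'k ten2 \<Rightarrow> 'k ten3" where
  "Lx \<zeta> x w = (\<lambda>(i,j,m). \<zeta> (\<zeta> x) i * w (j,m) + S1 \<zeta> (S2 \<zeta> w) (i,j) * x m - S1 \<zeta> w (i,m) * \<zeta> x j)"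

definition det3 :: "'k::field vec3 \<Rightarrow> 'k vec3 \<Rightarrow> 'k vec3 \<Rightarrow> 'k" where
  "det3 x y z = x 0 * y 1 * z 2 + y 0 * z 1 * x 2 + z 0 * x 1 * y 2 - x 0 * z 1 * y 2 - y 0 * x 1 * z 2 - z 0 * y 1 * x 2"

definition Gm :: "('k::field vec3 \<Rightarrow> 'k vec3) \<Rightarrow> 'k ten3 \<Rightarrow> 'k ten3" where
  "Gm \<zeta> u = T1 (inv \<zeta>) (T1 (inv \<zeta>) (T2 (inv \<zeta>) u))"

definition Phi :: "('k::field vec3 \<Rightarrow> 'k vec3) \<Rightarrow> 'k ten3 \<Rightarrow> 'k" where
  "Phi \<zeta> u = Gm \<zeta> u (0,1,2)"

lemma inv_klin: assumes k: "klin \<zeta>" and b: "bij \<zeta>" shows "klin (inv \<zeta>)"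
proof -
  have fi: "\<zeta> (inv \<zeta> v) = v" for v using b by (simp add: bij_is_surj surj_f_inv_f)
  have inj: "inj \<zeta>" using b bij_is_inj by auto
  show ?thesis unfolding klin_def
  proof (intro conjI allI)
    fix x y
    show "inv \<zeta> (x + y) = inv \<zeta> x + inv \<zeta> y"
      by (rule injD[OF inj]) (simp add: fi klin_add[OF k])
  next
    fix c x
    show "inv \<zeta> (scal c x) = scal c (inv \<zeta> x)"
      by (rule injD[OF inj]) (simp add: fi klin_scal[OF k])
  qed
qed

lemma Lx_bw2: assumes k: "klin \<zeta>" shows "Lx \<zeta> x (bw2 \<zeta> y z) = bw3 \<zeta> x y z"
proof -
  have h1: "S1 \<zeta> (S2 \<zeta> (bw2 \<zeta> y z)) = tens2 (\<zeta> (\<zeta> y)) (\<zeta> z) - tens2 (\<zeta> (\<zeta> z)) (\<zeta> y)"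
    unfolding bw2_def by (simp add: klin_diff[OF S1_klin[OF k]] klin_diff[OF S2_klin[OF k]] k S1_tens S2_tens)
  have h2: "S1 \<zeta> (bw2 \<zeta> y z) = tens2 (\<zeta> (\<zeta> y)) z - tens2 (\<zeta> (\<zeta> z)) y"
    unfolding bw2_def by (simp add: klin_diff[OF S1_klin[OF k]] k S1_tens)
  show ?thesis unfolding Lx_def h1 h2
    by (auto simp: fun_eq_iff bw2_def bw3_def tens2_def tens3_def algebra_simps)
qed

lemma Lx_klin: assumes k: "klin \<zeta>" shows "klin (Lx \<zeta> x)"
  unfolding klin_def
proof (intro conjI allI)
  fix v w :: "'a ten2"
  show "Lx \<zeta> x (v + w) = Lx \<zeta> x v + Lx \<zeta> x w"
    by (simp add: Lx_def fun_eq_iff klin_add[OF S1_klin[OF k]] klin_add[OF S2_klin[OF k]] algebra_simps)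
next
  fix c and w :: "'a ten2"
  show "Lx \<zeta> x (scal c w) = scal c (Lx \<zeta> x w)"
    by (simp add: Lx_def fun_eq_iff klin_scal[OF S1_klin[OF k]] klin_scal[OF S2_klin[OF k]] algebra_simps scal_apply)
qed

lemma Gm_klin: assumes k: "klin \<zeta>" and b: "bij \<zeta>" shows "klin (Gm \<zeta>)"
proof -
  have i: "klin (inv \<zeta>)" using inv_klin[OF k b] .
  have "klin (\<lambda>u. T1 (inv \<zeta>) (T1 (inv \<zeta>) (T2 (inv \<zeta>) u)))"
    by (rule klin_comp[OF klin_comp[OF T2_klin[OF i] T1_klin[OF i]] T1_klin[OF i]])
  then show ?thesis unfolding Gm_def[abs_def] .
qed

lemma Gm_tens: assumes k: "klin \<zeta>" and b: "bij \<zeta>"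
  shows "Gm \<zeta> (tens3 (\<zeta> (\<zeta> x)) (\<zeta> y) z) = tens3 x y z"
proof -
  have i: "klin (inv \<zeta>)" using inv_klin[OF k b] .
  have fi: "inv \<zeta> (\<zeta> v) = v" for v using b by (simp add: bij_is_inj)
  show ?thesis unfolding Gm_def by (simp add: T1_tens T2_tens i fi)
qed

lemma Phi_lf: assumes k: "klin \<zeta>" and b: "bij \<zeta>" shows "lin_form (Phi \<zeta>)"
  using Gm_klin[OF k b] unfolding lin_form_def klin_def Phi_def by (simp add: scal_apply)

lemma Phi_bw3: assumes k: "klin \<zeta>" and b: "bij \<zeta>"
  shows "Phi \<zeta> (bw3 \<zeta> x y z) = det3 x y z"
proof -
  have g: "klin (Gm \<zeta>)" using Gm_klin[OF k b] .
  have "Gm \<zeta> (bw3 \<zeta> x y z) = tens3 x y z + tens3 y z x + tens3 z x y - tens3 x z y - tens3 y x z - tens3 z y x"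
    unfolding bw3_def by (simp add: klin_add[OF g] klin_diff[OF g] Gm_tens[OF k b])
  then show ?thesis unfolding Phi_def by (simp add: tens3_def det3_def)
qed

lemma Phi_Lx_bw2: assumes k: "klin \<zeta>" and b: "bij \<zeta>"
  shows "Phi \<zeta> (Lx \<zeta> x (bw2 \<zeta> y z)) = det3 x y z"
  by (simp add: Lx_bw2[OF k] Phi_bw3[OF k b])



lemma Lx_sum: assumes k: "klin \<zeta>"
  shows "Lx \<zeta> x (\<Sum>p\<in>S. scal (c p) (bw2 \<zeta> (fst p) (snd p))) = (\<Sum>p\<in>S. scal (c p) (bw3 \<zeta> x (fst p) (snd p)))"
  by (simp add: klin_sum_scal[OF Lx_klin[OF k]] Lx_bw2[OF k])

lemma wprod_I2: assumes k: "klin \<zeta>" and w: "w \<in> I2 \<zeta>"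
  shows "wprod \<zeta> x w = Lx \<zeta> x w"
proof -
  obtain S c where S: "finite S" and wS: "w = (\<Sum>p\<in>S. scal (c p) (bw2 \<zeta> (fst p) (snd p)))"
    using w unfolding I2_def mem_Collect_eq by (elim exE conjE)
  show ?thesis unfolding wprod_def
  proof (rule the_equality)
    show "\<exists>S c. finite S \<and> w = (\<Sum>p\<in>S. scal (c p) (bw2 \<zeta> (fst p) (snd p)))
       \<and> Lx \<zeta> x w = (\<Sum>p\<in>S. scal (c p) (bw3 \<zeta> x (fst p) (snd p)))"
      apply (rule exI[where x=S], rule exI[where x=c])
      using S wS Lx_sum[OF k, of x c S] by simp
  next
    fix u assume "\<exists>S c. finite S \<and> w = (\<Sum>p\<in>S. scal (c p) (bw2 \<zeta> (fst p) (snd p)))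
       \<and> u = (\<Sum>p\<in>S. scal (c p) (bw3 \<zeta> x (fst p) (snd p)))"
    then obtain S' c' where "w = (\<Sum>p\<in>S'. scal (c' p) (bw2 \<zeta> (fst p) (snd p)))"
       "u = (\<Sum>p\<in>S'. scal (c' p) (bw3 \<zeta> x (fst p) (snd p)))" by (elim exE conjE)
    then show "u = Lx \<zeta> x w" using Lx_sum[OF k, of x c' S'] by simp
  qed
qed

lemma Lx_I2_rep: assumes k: "klin \<zeta>" and w: "w \<in> I2 \<zeta>"
  shows "\<exists>S c. finite S \<and> Lx \<zeta> x w = (\<Sum>p\<in>S. scal (c p) (bw3 \<zeta> (fst p) (fst (snd p)) (snd (snd p))))"
proof -
  obtain S c where S: "finite S" and wS: "w = (\<Sum>p\<in>S. scal (c p) (bw2 \<zeta> (fst p) (snd p)))"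
    using w unfolding I2_def mem_Collect_eq by (elim exE conjE)
  have inj: "inj_on (Pair x) S" by (auto simp: inj_on_def)
  have "(\<Sum>p\<in>Pair x ` S. scal (c (snd p)) (bw3 \<zeta> (fst p) (fst (snd p)) (snd (snd p))))
      = (\<Sum>p\<in>S. scal (c p) (bw3 \<zeta> x (fst p) (snd p)))"
    by (simp add: sum.reindex[OF inj])
  then have "Lx \<zeta> x w = (\<Sum>p\<in>Pair x ` S. scal (c (snd p)) (bw3 \<zeta> (fst p) (fst (snd p)) (snd (snd p))))"
    using Lx_sum[OF k, of x c S] wS by simp
  then show ?thesis apply - apply (rule exI[where x="Pair x ` S"], rule exI[where x="\<lambda>p. c (snd p)"])
    using S by simp
qed

lemma alt_add1: "alt_trilinear \<omega> \<Longrightarrow> \<omega> (x + y) z w = \<omega> x z w + \<omega> y z w"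
  by (simp add: alt_trilinear_def lin_form_def)
lemma alt_add2: "alt_trilinear \<omega> \<Longrightarrow> \<omega> z (x + y) w = \<omega> z x w + \<omega> z y w"
  by (simp add: alt_trilinear_def lin_form_def)
lemma alt_add3: "alt_trilinear \<omega> \<Longrightarrow> \<omega> z w (x + y) = \<omega> z w x + \<omega> z w y"
  by (simp add: alt_trilinear_def lin_form_def)

lemma alt_swap12: assumes a: "alt_trilinear \<omega>" shows "\<omega> y x z = - \<omega> x y z"
proof -
  have "0 = \<omega> (x + y) (x + y) z" using a unfolding alt_trilinear_def by simp
  also have "\<dots> = \<omega> x x z + \<omega> x y z + (\<omega> y x z + \<omega> y y z)"
    by (simp add: alt_add1[OF a] alt_add2[OF a])
  also have "\<dots> = \<omega> x y z + \<omega> y x z" using a unfolding alt_trilinear_def by simp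
  finally show ?thesis by (simp add: eq_neg_iff_add_eq_0 add.commute)
qed
lemma alt_swap23: assumes a: "alt_trilinear \<omega>" shows "\<omega> x z y = - \<omega> x y z"
proof -
  have "0 = \<omega> x (y + z) (y + z)" using a unfolding alt_trilinear_def by simp
  also have "\<dots> = \<omega> x y y + \<omega> x y z + (\<omega> x z y + \<omega> x z z)"
    by (simp add: alt_add3[OF a] alt_add2[OF a])
  also have "\<dots> = \<omega> x y z + \<omega> x z y" using a unfolding alt_trilinear_def by simp
  finally show ?thesis by (simp add: eq_neg_iff_add_eq_0 add.commute)
qed

lemma omega_rep: assumes a: "alt_trilinear \<omega>"
  shows "\<omega> x y z = \<omega> (e3 0) (e3 1) (e3 2) * det3 x y z"
proof -
  have l1: "lin_form (\<lambda>x. \<omega> x y z)" for y z using a unfolding alt_trilinear_def by blast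
  have l2: "lin_form (\<lambda>y. \<omega> x y z)" for x z using a unfolding alt_trilinear_def by blast
  have l3: "lin_form (\<lambda>z. \<omega> x y z)" for x y using a unfolding alt_trilinear_def by blast
  have z1: "\<omega> x x z = 0" for x z using a unfolding alt_trilinear_def by blast
  have z2: "\<omega> x y x = 0" for x y using a unfolding alt_trilinear_def by blast
  have z3: "\<omega> x y y = 0" for x y using a unfolding alt_trilinear_def by blast
  have e1: "\<omega> x y z = x 0 * \<omega> (e3 0) y z + x 1 * \<omega> (e3 1) y z + x 2 * \<omega> (e3 2) y z" for x y z
    using lf_expand[OF l1] .
  have e2: "\<omega> x y z = y 0 * \<omega> x (e3 0) z + y 1 * \<omega> x (e3 1) z + y 2 * \<omega> x (e3 2) z" for x y z
    using lf_expand[OF l2] .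
  have e3: "\<omega> x y z = z 0 * \<omega> x y (e3 0) + z 1 * \<omega> x y (e3 1) + z 2 * \<omega> x y (e3 2)" for x y z
    using lf_expand[OF l3] .
  let ?w = "\<omega> (e3 0) (e3 1) (e3 2)"
  have p1: "\<omega> (e3 0) (e3 2) (e3 1) = - ?w" by (rule alt_swap23[OF a])
  have p2: "\<omega> (e3 1) (e3 0) (e3 2) = - ?w" by (rule alt_swap12[OF a])
  have p3: "\<omega> (e3 1) (e3 2) (e3 0) = ?w" using alt_swap23[OF a, of "e3 1" "e3 0" "e3 2"] p2 by simp
  have p4: "\<omega> (e3 2) (e3 0) (e3 1) = ?w" using alt_swap12[OF a, of "e3 0" "e3 2" "e3 1"] p1 by simp
  have p5: "\<omega> (e3 2) (e3 1) (e3 0) = - ?w" using alt_swap12[OF a, of "e3 1" "e3 2" "e3 0"] p3 by simp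
  show ?thesis
    apply (rule trans[OF e1])
    apply (simp only: e2[of "e3 0" y z] e2[of "e3 1" y z] e2[of "e3 2" y z])
    apply (simp only: e3[of "e3 0" "e3 0" z] e3[of "e3 0" "e3 1" z] e3[of "e3 0" "e3 2" z]
       e3[of "e3 1" "e3 0" z] e3[of "e3 1" "e3 1" z] e3[of "e3 1" "e3 2" z]
       e3[of "e3 2" "e3 0" z] e3[of "e3 2" "e3 1" z] e3[of "e3 2" "e3 2" z])
    apply (simp add: z1 z2 z3 p1 p2 p3 p4 p5 det3_def algebra_simps)
    done
qed

lemma ot_eq: assumes k: "klin \<zeta>" and b: "bij \<zeta>" and a: "alt_trilinear \<omega>"
  and S: "finite S" and uS: "u = (\<Sum>p\<in>S. scal (c p) (bw3 \<zeta> (fst p) (fst (snd p)) (snd (snd p))))"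
  shows "omega_tilde \<zeta> \<omega> u = \<omega> (e3 0) (e3 1) (e3 2) * Phi \<zeta> u"
proof -
  let ?w = "\<omega> (e3 0) (e3 1) (e3 2)"
  have key: "Phi \<zeta> (\<Sum>p\<in>S. scal (c p) (bw3 \<zeta> (fst p) (fst (snd p)) (snd (snd p)))) * ?w
      = (\<Sum>p\<in>S. c p * \<omega> (fst p) (fst (snd p)) (snd (snd p)))" for S c
    apply (simp add: lf_sum_scal[OF Phi_lf[OF k b]] Phi_bw3[OF k b] omega_rep[OF a, of "fst _"] sum_distrib_right)
    apply (simp add: sum_distrib_left mult_ac)
    done
  show ?thesis unfolding omega_tilde_def
  proof (rule the_equality)
    show "\<exists>S c. finite S \<and> u = (\<Sum>p\<in>S. scal (c p) (bw3 \<zeta> (fst p) (fst (snd p)) (snd (snd p))))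
       \<and> ?w * Phi \<zeta> u = (\<Sum>p\<in>S. c p * \<omega> (fst p) (fst (snd p)) (snd (snd p)))"
    proof -
      have "?w * Phi \<zeta> u = (\<Sum>p\<in>S. c p * \<omega> (fst p) (fst (snd p)) (snd (snd p)))"
        using key[where S=S and c=c] uS by (simp only: mult.commute)
      then show ?thesis
        apply -
        apply (rule exI[where x=S], rule exI[where x=c])
        using S uS by simp
    qed
  next
    fix t assume "\<exists>S c. finite S \<and> u = (\<Sum>p\<in>S. scal (c p) (bw3 \<zeta> (fst p) (fst (snd p)) (snd (snd p))))
       \<and> t = (\<Sum>p\<in>S. c p * \<omega> (fst p) (fst (snd p)) (snd (snd p)))"
    then obtain S' c' where "u = (\<Sum>p\<in>S'. scal (c' p) (bw3 \<zeta> (fst p) (fst (snd p)) (snd (snd p))))"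
       "t = (\<Sum>p\<in>S'. c' p * \<omega> (fst p) (fst (snd p)) (snd (snd p)))" by (elim exE conjE)
    then show "t = ?w * Phi \<zeta> u" using key[where S=S' and c=c'] by (simp only: mult.commute)
  qed
qed



definition bX :: "'k::field vec3 \<Rightarrow> 'k ten2 \<Rightarrow> 'k ten3" where
  "bX b X = (\<lambda>(i,j,m). b i * X (j,m))"
definition Xc :: "'k::field ten2 \<Rightarrow> 'k vec3 \<Rightarrow> 'k ten3" where
  "Xc X c = (\<lambda>(i,j,m). X (i,j) * c m)"

lemma scal_one: "scal 1 (f :: 'i \<Rightarrow> 'k::field) = f" by (simp add: scal_def)

lemma hecke_klin: "hecke q R \<Longrightarrow> klin R" by (simp add: hecke_def)
lemma hecke_braid: "hecke q R \<Longrightarrow> R12 R (R23 R (R12 R U)) = R23 R (R12 R (R23 R U))" by (simp add: hecke_def)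
lemma hecke_quad: "hecke q R \<Longrightarrow> R (R T + T) - scal q (R T + T) = 0" by (simp add: hecke_def)

lemma quad_lemma: assumes h: "hecke q R" and r: "\<And>X. R (R X) = scal q (R X)"
  shows "R X = scal q X"
proof -
  have k: "klin R" using hecke_klin[OF h] .
  have "R (R X + X) - scal q (R X + X) = 0" using hecke_quad[OF h] .
  then have "scal q (R X) + R X - scal q (R X + X) = 0" by (simp add: klin_add[OF k] r)
  show ?thesis
  proof
    fix i
    have "(scal q (R X) + R X - scal q (R X + X)) i = 0" using \<open>scal q (R X) + R X - scal q (R X + X) = 0\<close> by simp
    then have "q * R X i + R X i - q * (R X i + X i) = 0" by (simp add: scal_apply)
    then show "R X i = scal q X i" by (simp add: scal_apply algebra_simps)
  qed
qed

lemma R_not_q: assumes k: "klin \<zeta>" and b: "bij \<zeta>" and ri: "range (\<lambda>T. R T - scal q T) = I2 \<zeta>"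
  shows "\<not> (\<forall>X. R X = scal q X)"
proof
  assume all: "\<forall>X. R X = scal q X"
  have "bw2 \<zeta> (e3 0) (e3 1) \<in> I2 \<zeta>" unfolding I2_def mem_Collect_eq
    apply (rule exI[where x="{(e3 0, e3 1)}"], rule exI[where x="\<lambda>p. 1"])
    by (simp add: scal_one)
  then have "bw2 \<zeta> (e3 0) (e3 1) \<in> range (\<lambda>T. R T - scal q T)" using ri by simp
  then obtain T where "bw2 \<zeta> (e3 0) (e3 1) = R T - scal q T" by auto
  then have z: "bw2 \<zeta> (e3 0) (e3 1) = 0" using all by simp
  have i: "klin (inv \<zeta>)" using inv_klin[OF k b] .
  have fi: "inv \<zeta> (\<zeta> v) = v" for v using b by (simp add: bij_is_inj)
  have "S1 (inv \<zeta>) (bw2 \<zeta> (e3 0) (e3 1)) = tens2 (e3 0) (e3 1) - tens2 (e3 1) (e3 0)"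
    unfolding bw2_def by (simp add: klin_diff[OF S1_klin[OF i]] S1_tens[OF i] fi)
  then have "tens2 (e3 0) (e3 1) - tens2 (e3 1) (e3 0) = (0 :: 'a ten2)"
    using z klin_zero[OF S1_klin[OF i]] by simp
  then have "(tens2 (e3 0) (e3 1) - tens2 (e3 1) (e3 0)) (0,1) = (0 :: 'a)" by simp
  then show False by (simp add: tens2_def e3_def)
qed

lemma R12_bX: assumes k: "klin R" and hb: "\<And>v. R (tens2 b v) = scal q (tens2 b v)"
  shows "R12 R (bX b X) = bX b (scal q X)"
proof (rule ext, clarify)
  fix i j m :: 3
  have eq: "(\<lambda>(k, l). bX b X (k, l, m)) = tens2 b (\<lambda>l. X (l,m))"
    by (auto simp: bX_def tens2_def fun_eq_iff)
  have "R12 R (bX b X) (i,j,m) = R (\<lambda>(k, l). bX b X (k, l, m)) (i,j)" by (simp add: R12_def)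
  also have "\<dots> = R (tens2 b (\<lambda>l. X (l,m))) (i,j)" by (simp only: eq)
  also have "\<dots> = bX b (scal q X) (i,j,m)" by (simp only: hb) (simp add: scal_apply tens2_def bX_def)
  finally show "R12 R (bX b X) (i,j,m) = bX b (scal q X) (i,j,m)" .
qed

lemma R23_bX: assumes k: "klin R" shows "R23 R (bX b X) = bX b (R X)"
proof (rule ext, clarify)
  fix i j m :: 3
  have eq: "(\<lambda>(k, l). bX b X (i, k, l)) = scal (b i) X"
    by (auto simp: bX_def scal_def fun_eq_iff)
  have "R23 R (bX b X) (i,j,m) = R (\<lambda>(k, l). bX b X (i, k, l)) (j,m)" by (simp add: R23_def)
  also have "\<dots> = R (scal (b i) X) (j,m)" by (simp only: eq)
  also have "\<dots> = bX b (R X) (i,j,m)" by (simp add: klin_scal[OF k] scal_apply bX_def)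
  finally show "R23 R (bX b X) (i,j,m) = bX b (R X) (i,j,m)" .
qed

lemma R23_Xc: assumes k: "klin R" and hc: "\<And>v. R (tens2 v c) = scal q (tens2 v c)"
  shows "R23 R (Xc X c) = Xc (scal q X) c"
proof (rule ext, clarify)
  fix i j m :: 3
  have eq: "(\<lambda>(k, l). Xc X c (i, k, l)) = tens2 (\<lambda>k. X (i,k)) c"
    by (auto simp: Xc_def tens2_def fun_eq_iff)
  have "R23 R (Xc X c) (i,j,m) = R (\<lambda>(k, l). Xc X c (i, k, l)) (j,m)" by (simp add: R23_def)
  also have "\<dots> = R (tens2 (\<lambda>k. X (i,k)) c) (j,m)" by (simp only: eq)
  also have "\<dots> = Xc (scal q X) c (i,j,m)" by (simp only: hc) (simp add: scal_apply tens2_def Xc_def)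
  finally show "R23 R (Xc X c) (i,j,m) = Xc (scal q X) c (i,j,m)" .
qed

lemma R12_Xc: assumes k: "klin R" shows "R12 R (Xc X c) = Xc (R X) c"
proof (rule ext, clarify)
  fix i j m :: 3
  have eq: "(\<lambda>(k, l). Xc X c (k, l, m)) = scal (c m) X"
    by (auto simp: Xc_def scal_def fun_eq_iff mult.commute)
  have "R12 R (Xc X c) (i,j,m) = R (\<lambda>(k, l). Xc X c (k, l, m)) (i,j)" by (simp add: R12_def)
  also have "\<dots> = R (scal (c m) X) (i,j)" by (simp only: eq)
  also have "\<dots> = Xc (R X) c (i,j,m)" by (simp add: klin_scal[OF k] scal_apply Xc_def mult.commute)
  finally show "R12 R (Xc X c) (i,j,m) = Xc (R X) c (i,j,m)" .
qed

lemma hecke_left: assumes h: "hecke q R" and q: "q \<noteq> 0"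
  and k: "klin \<zeta>" and bj: "bij \<zeta>" and ri: "range (\<lambda>T. R T - scal q T) = I2 \<zeta>"
  and hb: "\<And>v. R (tens2 b v) = scal q (tens2 b v)"
  shows "b = 0"
proof (rule ccontr)
  assume "b \<noteq> 0"
  then obtain i where bi: "b i \<noteq> 0" by (auto simp: fun_eq_iff)
  have kR: "klin R" using hecke_klin[OF h] .
  have "R (R X) = scal q (R X)" for X
  proof
    fix jm :: "3 \<times> 3"
    obtain j m where jm: "jm = (j,m)" by (cases jm)
    have e: "R12 R (R23 R (R12 R (bX b X))) = R23 R (R12 R (R23 R (bX b X)))" using hecke_braid[OF h] .
    have "bX b (scal q (R (scal q X))) = bX b (R (scal q (R X)))"
      using e by (simp add: R12_bX[OF kR hb] R23_bX[OF kR])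
    then have "bX b (scal q (R (scal q X))) (i,j,m) = bX b (R (scal q (R X))) (i,j,m)" by (rule fun_cong)
    then have "b i * (q * (q * R X (j,m))) = b i * (q * R (R X) (j,m))"
      by (simp add: bX_def klin_scal[OF kR] scal_apply)
    then have "q * (q * R X (j,m)) = q * R (R X) (j,m)" using bi by simp
    then show "R (R X) jm = scal q (R X) jm" using q jm by (simp add: scal_apply)
  qed
  then have "\<forall>X. R X = scal q X" using quad_lemma[OF h] by metis
  then show False using R_not_q[OF k bj ri] by simp
qed

lemma hecke_right: assumes h: "hecke q R" and q: "q \<noteq> 0"
  and k: "klin \<zeta>" and bj: "bij \<zeta>" and ri: "range (\<lambda>T. R T - scal q T) = I2 \<zeta>"
  and hc: "\<And>v. R (tens2 v c) = scal q (tens2 v c)"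
  shows "c = 0"
proof (rule ccontr)
  assume "c \<noteq> 0"
  then obtain m where cm: "c m \<noteq> 0" by (auto simp: fun_eq_iff)
  have kR: "klin R" using hecke_klin[OF h] .
  have "R (R X) = scal q (R X)" for X
  proof
    fix ij :: "3 \<times> 3"
    obtain i j where ij: "ij = (i,j)" by (cases ij)
    have e: "R12 R (R23 R (R12 R (Xc X c))) = R23 R (R12 R (R23 R (Xc X c)))" using hecke_braid[OF h] .
    have "Xc (R (scal q (R X))) c = Xc (scal q (R (scal q X))) c"
      using e by (simp add: R23_Xc[OF kR hc] R12_Xc[OF kR])
    then have "Xc (R (scal q (R X))) c (i,j,m) = Xc (scal q (R (scal q X))) c (i,j,m)" by (rule fun_cong)
    then have "q * R (R X) (i,j) * c m = q * (q * R X (i,j)) * c m"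
      by (simp add: Xc_def klin_scal[OF kR] scal_apply)
    then have "q * R (R X) (i,j) = q * (q * R X (i,j))" using cm by simp
    then show "R (R X) ij = scal q (R X) ij" using q ij by (simp add: scal_apply)
  qed
  then have "\<forall>X. R X = scal q X" using quad_lemma[OF h] by metis
  then show False using R_not_q[OF k bj ri] by simp
qed



lemma sum_fun_app: "(\<Sum>t\<in>A. f t) s = (\<Sum>t\<in>A. f t s)"
  by (induct A rule: infinite_finite_induct) auto


lemma vs_scal: "vector_space (scal :: 'k::field \<Rightarrow> ('i \<Rightarrow> 'k) \<Rightarrow> ('i \<Rightarrow> 'k))"
  by unfold_locales (simp_all add: scal_def fun_eq_iff algebra_simps)

lemma linear_scal_iff: "Vector_Spaces.linear (scal :: 'k::field \<Rightarrow> ('i \<Rightarrow> 'k) \<Rightarrow> ('i \<Rightarrow> 'k)) (scal :: 'k \<Rightarrow> ('j \<Rightarrow> 'k) \<Rightarrow> ('j \<Rightarrow> 'k)) f \<longleftrightarrow> klin f"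
  by (simp add: Vector_Spaces.linear_iff vs_scal klin_def)

lemma left_inv_exists:
  fixes h :: "('i \<Rightarrow> 'k::field) \<Rightarrow> ('j \<Rightarrow> 'k)"
  assumes "klin h" "inj h"
  shows "\<exists>g :: ('j \<Rightarrow> 'k) \<Rightarrow> ('i \<Rightarrow> 'k). klin g \<and> (\<forall>x. g (h x) = x)"
proof -
  interpret vector_space_pair "scal :: 'k \<Rightarrow> ('i \<Rightarrow> 'k) \<Rightarrow> _" "scal :: 'k \<Rightarrow> ('j \<Rightarrow> 'k) \<Rightarrow> _"
    by (simp add: vector_space_pair_def vs_scal)
  have "Vector_Spaces.linear (scal :: 'k \<Rightarrow> ('i \<Rightarrow> 'k) \<Rightarrow> _) (scal :: 'k \<Rightarrow> ('j \<Rightarrow> 'k) \<Rightarrow> _) h"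
    using assms(1) by (simp add: linear_scal_iff)
  from linear_injective_left_inverse[OF this assms(2)] obtain g where
    "Vector_Spaces.linear (scal :: 'k \<Rightarrow> ('j \<Rightarrow> 'k) \<Rightarrow> _) (scal :: 'k \<Rightarrow> ('i \<Rightarrow> 'k) \<Rightarrow> _) g" "g \<circ> h = id" by blast
  then show ?thesis by (auto simp: linear_scal_iff fun_eq_iff)
qed

definition delta :: "'i \<Rightarrow> 'i \<Rightarrow> 'k::field" where "delta t = (\<lambda>s. if s = t then 1 else 0)"

lemma fin_expand: "(y :: ('i::finite) \<Rightarrow> 'k::field) = (\<Sum>t\<in>UNIV. scal (y t) (delta t))"
proof
  fix s
  have "(\<Sum>t\<in>UNIV. scal (y t) (delta t)) s = (\<Sum>t\<in>UNIV. y t * (if s = t then 1 else 0))"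
    by (simp add: sum_fun_app scal_apply delta_def)
  also have "\<dots> = y s" by (simp add: if_distrib cong: if_cong)
  finally show "y s = (\<Sum>t\<in>UNIV. scal (y t) (delta t)) s" by simp
qed

lemma lf_fin: "lin_form (\<psi> :: (('i::finite) \<Rightarrow> 'k::field) \<Rightarrow> 'k) \<Longrightarrow> \<psi> y = (\<Sum>t\<in>UNIV. y t * \<psi> (delta t))"
  using arg_cong[OF fin_expand[of y], of \<psi>] by (simp add: lf_sum_scal)



lemma Ymap_klin: assumes k: "klin R" shows "klin (Ymap q R)"
  unfolding klin_def Ymap_def
  by (auto simp: fun_eq_iff klin_add[OF k] klin_scal[OF k] scal_apply algebra_simps)

lemma Ymap_I2: assumes k: "klin R" and ri: "range (\<lambda>T. R T - scal q T) = I2 \<zeta>"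
  shows "Ymap q R T \<in> I2 \<zeta>"
proof -
  have "Ymap q R T = R (- T) - scal q (- T)"
    by (auto simp: fun_eq_iff Ymap_def klin_neg[OF k] scal_apply)
  then have "Ymap q R T \<in> range (\<lambda>T. R T - scal q T)" by auto
  then show ?thesis using ri by simp
qed

lemma ell_formula: assumes k: "klin \<zeta>" and b: "bij \<zeta>" and h: "hecke q R"
  and ri: "range (\<lambda>T. R T - scal q T) = I2 \<zeta>" and a: "alt_trilinear \<omega>"
  shows "ell \<zeta> q R \<omega> x y z = \<omega> (e3 0) (e3 1) (e3 2) * Phi \<zeta> (Lx \<zeta> x (Ymap q R (tens2 (\<zeta> y) z)))"
proof -
  let ?w = "Ymap q R (tens2 (\<zeta> y) z)"
  have w: "?w \<in> I2 \<zeta>" using Ymap_I2[OF hecke_klin[OF h] ri] .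
  obtain S c where S: "finite S" and eq: "Lx \<zeta> x ?w = (\<Sum>p\<in>S. scal (c p) (bw3 \<zeta> (fst p) (fst (snd p)) (snd (snd p))))"
    using Lx_I2_rep[OF k w, of x] by (elim exE conjE)
  have "ell \<zeta> q R \<omega> x y z = omega_tilde \<zeta> \<omega> (Lx \<zeta> x ?w)"
    by (simp add: ell_def wprod_I2[OF k w])
  also have "\<dots> = \<omega> (e3 0) (e3 1) (e3 2) * Phi \<zeta> (Lx \<zeta> x ?w)"
    by (rule ot_eq[OF k b a S eq])
  finally show ?thesis .
qed

definition Fx where "Fx \<zeta> q R x T = Phi \<zeta> (Lx \<zeta> x (Ymap q R T))"

lemma Fx_lf: assumes k: "klin \<zeta>" and b: "bij \<zeta>" and kR: "klin R"
  shows "lin_form (Fx \<zeta> q R x)"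
proof -
  have "klin (\<lambda>T. Lx \<zeta> x (Ymap q R T))" by (rule klin_comp[OF Ymap_klin[OF kR] Lx_klin[OF k]])
  from lf_comp[OF this Phi_lf[OF k b]] show ?thesis unfolding Fx_def[abs_def] .
qed

lemma I2_funct_eq: assumes f: "lin_form f" and g: "lin_form g"
  and e: "\<And>y z. f (bw2 \<zeta> y z) = g (bw2 \<zeta> y z)" and w: "w \<in> I2 \<zeta>"
  shows "f w = g w"
proof -
  obtain S c where "w = (\<Sum>p\<in>S. scal (c p) (bw2 \<zeta> (fst p) (snd p)))"
    using w unfolding I2_def mem_Collect_eq by (elim exE conjE)
  then show ?thesis by (simp add: lf_sum_scal[OF f] lf_sum_scal[OF g] e)
qed

lemma S1inv_bw2: assumes k: "klin \<zeta>" and b: "bij \<zeta>"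
  shows "S1 (inv \<zeta>) (bw2 \<zeta> y z) = tens2 y z - tens2 z y"
proof -
  have i: "klin (inv \<zeta>)" using inv_klin[OF k b] .
  have fi: "inv \<zeta> (\<zeta> v) = v" for v using b by (simp add: bij_is_inj)
  show ?thesis unfolding bw2_def by (simp add: klin_diff[OF S1_klin[OF i]] S1_tens[OF i] fi)
qed

lemma lf_entry: "klin f \<Longrightarrow> lin_form (\<lambda>w. f w p)"
  by (simp add: lin_form_def klin_def scal_apply)
lemma lf_negf: "lin_form (f :: ('i \<Rightarrow> 'k::field) \<Rightarrow> 'k) \<Longrightarrow> lin_form (\<lambda>w. - f w)"
  by (simp add: lin_form_def algebra_simps)
lemma lf_0: "lin_form (\<lambda>w::('i \<Rightarrow> 'k::field). (0::'k))"
  by (simp add: lin_form_def)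

lemma entries:
  assumes k: "klin \<zeta>" and b: "bij \<zeta>" and w: "w \<in> I2 \<zeta>"
  shows "Phi \<zeta> (Lx \<zeta> (e3 0) w) = S1 (inv \<zeta>) w (1,2)"
    and "Phi \<zeta> (Lx \<zeta> (e3 1) w) = S1 (inv \<zeta>) w (2,0)"
    and "Phi \<zeta> (Lx \<zeta> (e3 2) w) = S1 (inv \<zeta>) w (0,1)"
    and "S1 (inv \<zeta>) w (i,i) = 0"
    and "S1 (inv \<zeta>) w (j,i) = - S1 (inv \<zeta>) w (i,j)"
proof -
  have i: "klin (inv \<zeta>)" using inv_klin[OF k b] .
  have lP: "lin_form (\<lambda>w. Phi \<zeta> (Lx \<zeta> x w))" for x by (rule lf_comp[OF Lx_klin[OF k] Phi_lf[OF k b]])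
  have lS: "lin_form (\<lambda>w. S1 (inv \<zeta>) w p)" for p by (rule lf_entry[OF S1_klin[OF i]])
  show "Phi \<zeta> (Lx \<zeta> (e3 0) w) = S1 (inv \<zeta>) w (1,2)"
    by (rule I2_funct_eq[OF lP lS _ w]) (simp add: Phi_Lx_bw2[OF k b] S1inv_bw2[OF k b] det3_def e3_def tens2_def)
  show "Phi \<zeta> (Lx \<zeta> (e3 1) w) = S1 (inv \<zeta>) w (2,0)"
    by (rule I2_funct_eq[OF lP lS _ w]) (simp add: Phi_Lx_bw2[OF k b] S1inv_bw2[OF k b] det3_def e3_def tens2_def algebra_simps)
  show "Phi \<zeta> (Lx \<zeta> (e3 2) w) = S1 (inv \<zeta>) w (0,1)"
    by (rule I2_funct_eq[OF lP lS _ w]) (simp add: Phi_Lx_bw2[OF k b] S1inv_bw2[OF k b] det3_def e3_def tens2_def algebra_simps)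
  show "S1 (inv \<zeta>) w (i,i) = 0"
    by (rule I2_funct_eq[OF lS lf_0 _ w]) (simp add: S1inv_bw2[OF k b] tens2_def mult.commute)
  show "S1 (inv \<zeta>) w (j,i) = - S1 (inv \<zeta>) w (i,j)"
    by (rule I2_funct_eq[OF lS lf_negf[OF lS] _ w]) (simp add: S1inv_bw2[OF k b] tens2_def mult.commute)
qed

lemma I2_zero:
  assumes k: "klin \<zeta>" and b: "bij \<zeta>" and w: "w \<in> I2 \<zeta>"
    and z0: "Phi \<zeta> (Lx \<zeta> (e3 0) w) = 0" and z1: "Phi \<zeta> (Lx \<zeta> (e3 1) w) = 0"
    and z2: "Phi \<zeta> (Lx \<zeta> (e3 2) w) = 0"
  shows "w = 0"
proof -
  let ?v = "S1 (inv \<zeta>) w"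
  have a: "?v (1,2) = 0" "?v (2,0) = 0" "?v (0,1) = 0"
    using entries(1-3)[OF k b w] z0 z1 z2 by simp_all
  have d: "?v (i,i) = 0" for i using entries(4)[OF k b w] .
  have s: "?v (j,i) = - ?v (i,j)" for i j using entries(5)[OF k b w] .
  have v0: "?v = 0"
  proof (rule ext, clarify)
    fix i j :: 3
    show "?v (i,j) = 0 (i,j)"
      using exhaust3[of i] exhaust3[of j] a d s[of 2 1] s[of 0 2] s[of 1 0] by auto
  qed
  have fi: "\<zeta> (inv \<zeta> v) = v" for v using b by (simp add: bij_is_surj surj_f_inv_f)
  have "w = S1 \<zeta> ?v" by (simp add: S1_comp fi S1_def)
  also have "\<dots> = 0" using v0 klin_zero[OF S1_klin[OF k]] by simp
  finally show ?thesis .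
qed



lemma tens2_add2: "tens2 u (z + z') = tens2 u z + tens2 u z'"
  by (auto simp: tens2_def fun_eq_iff algebra_simps)
lemma tens2_scal2: "tens2 u (scal c z) = scal c (tens2 u z)"
  by (auto simp: tens2_def fun_eq_iff scal_apply algebra_simps)

lemma tens_expand1: "tens2 v (z :: 'k::field vec3) = scal (v 0) (tens2 (e3 0) z) + scal (v 1) (tens2 (e3 1) z) + scal (v 2) (tens2 (e3 2) z)"
proof (rule ext, clarify)
  fix i j :: 3
  show "tens2 v z (i,j) = (scal (v 0) (tens2 (e3 0) z) + scal (v 1) (tens2 (e3 1) z) + scal (v 2) (tens2 (e3 2) z)) (i,j)"
    using exhaust3[of i] by (auto simp: tens2_def e3_def scal_apply)
qed

lemma tens_delta: "tens2 (e3 a) (e3 b) = (delta (a,b) :: 3 \<times> 3 \<Rightarrow> 'k::field)"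
  by (auto simp: tens2_def e3_def delta_def fun_eq_iff)

lemma ten2_expand: "(T :: 'k::field ten2) = (\<Sum>t\<in>UNIV. scal (T t) (tens2 (e3 (fst t)) (e3 (snd t))))"
  using fin_expand[of T] by (simp add: tens_delta)

lemma bw2_in_I2: "bw2 \<zeta> y z \<in> I2 \<zeta>"
  unfolding I2_def mem_Collect_eq
  apply (rule exI[where x="{(y, z)}"], rule exI[where x="\<lambda>p. 1"])
  by (simp add: scal_one)

lemma e3_inj: "e3 a = (e3 b :: 'k::field vec3) \<Longrightarrow> a = b"
proof -
  assume "e3 a = (e3 b :: 'k vec3)"
  then have "e3 a a = (e3 b a :: 'k)" by simp
  then show "a = b" by (simp add: e3_def split: if_splits)
qed

lemma Y_zero_from_F:
  assumes k: "klin \<zeta>" and b: "bij \<zeta>" and h: "hecke q R" and ri: "range (\<lambda>T. R T - scal q T) = I2 \<zeta>"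
    and f0: "Fx \<zeta> q R (e3 0) T = 0" and f1: "Fx \<zeta> q R (e3 1) T = 0" and f2: "Fx \<zeta> q R (e3 2) T = 0"
  shows "R T = scal q T"
proof -
  have w: "Ymap q R T \<in> I2 \<zeta>" using Ymap_I2[OF hecke_klin[OF h] ri] .
  have "Ymap q R T = 0" using I2_zero[OF k b w] f0 f1 f2 unfolding Fx_def by simp
  then show ?thesis by (auto simp: fun_eq_iff Ymap_def scal_apply dest: fun_cong)
qed

theorem lemma2p4:
  fixes \<zeta> :: "'k::field vec3 \<Rightarrow> 'k vec3"
    and q :: 'k
    and R :: "'k ten2 \<Rightarrow> 'k ten2"
    and \<omega> :: "'k vec3 \<Rightarrow> 'k vec3 \<Rightarrow> 'k vec3 \<Rightarrow> 'k"
  assumes zeta_GL: "klin \<zeta>" "bij \<zeta>"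
    and q_nz: "q \<noteq> 0"
    and R_hecke: "hecke q R"
    and R_image: "range (\<lambda>T. R T - scal q T) = I2 \<zeta>"
    and omega_alt: "alt_trilinear \<omega>"
    and omega_nz: "\<omega> \<noteq> (\<lambda>x y z. 0)"
  shows "(\<forall>\<phi> :: 'k vec3 \<Rightarrow> 'k. lin_form \<phi> \<longrightarrow>
            (\<exists>S c. finite S \<and> \<phi> = (\<lambda>z. \<Sum>p\<in>S. c p * ell \<zeta> q R \<omega> (fst p) (snd p) z)))
       \<and> (\<forall>a. ((\<forall>x. ell \<zeta> q R \<omega> a x = (\<lambda>z. 0)) \<or> (\<forall>x. ell \<zeta> q R \<omega> x a = (\<lambda>z. 0))) \<longrightarrow> a = 0)"
proof -
  note k = zeta_GL(1) and bj = zeta_GL(2) and h = R_hecke and ri = R_image and al = omega_alt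
  have kR: "klin R" using hecke_klin[OF h] .
  define w0 where "w0 = \<omega> (e3 0) (e3 1) (e3 2)"
  have w0: "w0 \<noteq> 0"
  proof
    assume "w0 = 0"
    then have "\<omega> x y z = 0" for x y z using omega_rep[OF al, of x y z] unfolding w0_def by simp
    then have "\<omega> = (\<lambda>x y z. 0)" by (simp add: fun_eq_iff)
    then show False using omega_nz by simp
  qed
  have ellF: "ell \<zeta> q R \<omega> x y z = w0 * Fx \<zeta> q R x (tens2 (\<zeta> y) z)" for x y z
    unfolding w0_def Fx_def by (rule ell_formula[OF k bj h ri al])
  have fi: "\<zeta> (inv \<zeta> v) = v" for v using bj by (simp add: bij_is_surj surj_f_inv_f)
  have lF: "lin_form (Fx \<zeta> q R x)" for x by (rule Fx_lf[OF k bj kR])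
  have keyR: "c = 0" if "\<And>a b. Fx \<zeta> q R (e3 a) (tens2 (e3 b) c) = 0" for c
  proof -
    have rb: "R (tens2 (e3 b) c) = scal q (tens2 (e3 b) c)" for b
      by (rule Y_zero_from_F[OF k bj h ri that that that])
    have "R (tens2 v c) = scal q (tens2 v c)" for v
    proof -
      have "R (tens2 v c) = R (scal (v 0) (tens2 (e3 0) c) + scal (v 1) (tens2 (e3 1) c) + scal (v 2) (tens2 (e3 2) c))"
        by (subst tens_expand1, rule refl)
      also have "\<dots> = scal q (scal (v 0) (tens2 (e3 0) c) + scal (v 1) (tens2 (e3 1) c) + scal (v 2) (tens2 (e3 2) c))"
        by (simp add: klin_add[OF kR] klin_scal[OF kR] rb fun_eq_iff scal_apply algebra_simps)
      also have "\<dots> = scal q (tens2 v c)" by (subst (2) tens_expand1, rule refl)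
      finally show ?thesis .
    qed
    then show ?thesis by (rule hecke_right[OF h q_nz k bj ri])
  qed
  have part1: "\<exists>S c. finite S \<and> \<phi> = (\<lambda>z. \<Sum>p\<in>S. c p * ell \<zeta> q R \<omega> (fst p) (snd p) z)"
    if "lin_form \<phi>" for \<phi> :: "'k vec3 \<Rightarrow> 'k"
  proof -
    define hh :: "'k vec3 \<Rightarrow> (3 \<times> 3 \<Rightarrow> 'k)" where
      "hh z = (\<lambda>t. Fx \<zeta> q R (e3 (fst t)) (tens2 (e3 (snd t)) z))" for z
    have khh: "klin hh"
      unfolding klin_def hh_def
      by (simp add: tens2_add2 tens2_scal2 lf_add[OF lF] lf_scal[OF lF] fun_eq_iff scal_apply)
    have ihh: "inj hh"
    proof (rule injI)
      fix z z' assume "hh z = hh z'"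
      then have "hh (z - z') = 0" by (simp add: klin_diff[OF khh])
      then have "Fx \<zeta> q R (e3 a) (tens2 (e3 b) (z - z')) = 0" for a b
        unfolding hh_def by (drule_tac x="(a,b)" in fun_cong) simp
      then have "z - z' = 0" by (rule keyR)
      then show "z = z'" by simp
    qed
    obtain g where kg: "klin g" and gh: "\<And>x. g (hh x) = x"
      using left_inv_exists[OF khh ihh] by blast
    define \<psi> where "\<psi> y = \<phi> (g y)" for y
    have l\<psi>: "lin_form \<psi>" unfolding \<psi>_def[abs_def] by (rule lf_comp[OF kg that])
    define f :: "3 \<times> 3 \<Rightarrow> 'k vec3 \<times> 'k vec3" where "f t = (e3 (fst t), inv \<zeta> (e3 (snd t)))" for t
    have injf: "inj f"
    proof (rule injI)
      fix t t' assume "f t = f t'"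
      then have "e3 (fst t) = (e3 (fst t') :: 'k vec3)" "inv \<zeta> (e3 (snd t)) = (inv \<zeta> (e3 (snd t')) :: 'k vec3)"
        by (auto simp: f_def)
      then have 1: "fst t = fst t'" and "\<zeta> (inv \<zeta> (e3 (snd t))) = (\<zeta> (inv \<zeta> (e3 (snd t'))) :: 'k vec3)"
        by (simp_all add: e3_inj)
      then have "e3 (snd t) = (e3 (snd t') :: 'k vec3)" by (simp add: fi)
      then have 2: "snd t = snd t'" by (rule e3_inj)
      show "t = t'" using 1 2 by (simp add: prod_eq_iff)
    qed
    define c where "c p = \<psi> (delta (inv f p)) / w0" for p
    have "\<phi> z = (\<Sum>p\<in>f ` UNIV. c p * ell \<zeta> q R \<omega> (fst p) (snd p) z)" for z
    proof -
      have "\<phi> z = \<psi> (hh z)" by (simp add: \<psi>_def gh)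
      also have "\<dots> = (\<Sum>t\<in>UNIV. hh z t * \<psi> (delta t))" by (rule lf_fin[OF l\<psi>])
      also have "\<dots> = (\<Sum>t\<in>UNIV. c (f t) * ell \<zeta> q R \<omega> (fst (f t)) (snd (f t)) z)"
      proof (rule sum.cong[OF refl])
        fix t :: "3 \<times> 3"
        show "hh z t * \<psi> (delta t) = c (f t) * ell \<zeta> q R \<omega> (fst (f t)) (snd (f t)) z"
        proof -
          have cf: "c (f t) = \<psi> (delta t) / w0" by (simp add: c_def inv_f_f[OF injf])
          show ?thesis using w0 unfolding cf by (simp add: f_def ellF fi hh_def)
        qed
      qed
      also have "\<dots> = (\<Sum>p\<in>f ` UNIV. c p * ell \<zeta> q R \<omega> (fst p) (snd p) z)"
        by (simp add: sum.reindex[OF inj_on_subset[OF injf subset_UNIV]])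
      finally show ?thesis .
    qed
    then have "\<phi> = (\<lambda>z. \<Sum>p\<in>f ` UNIV. c p * ell \<zeta> q R \<omega> (fst p) (snd p) z)" by (rule ext)
    then show ?thesis
      apply -
      apply (rule exI[where x="f ` UNIV"], rule exI[where x=c])
      by simp
  qed
  have part2a: "a = 0" if "\<forall>x. ell \<zeta> q R \<omega> a x = (\<lambda>z. 0)" for a
  proof -
    have "Fx \<zeta> q R a (tens2 (\<zeta> y) z) = 0" for y z
      using fun_cong[OF spec[OF that, of y], of z] w0 by (simp add: ellF)
    then have tz: "Fx \<zeta> q R a (tens2 u z) = 0" for u z using fi by metis
    have FT: "Fx \<zeta> q R a T = 0" for T
      by (subst ten2_expand) (simp add: lf_sum_scal[OF lF] tz)
    have d: "det3 a y z = 0" for y z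
    proof -
      have "bw2 \<zeta> y z \<in> range (\<lambda>T. R T - scal q T)" using ri bw2_in_I2 by simp
      then obtain T where T: "bw2 \<zeta> y z = R T - scal q T" by auto
      have "bw2 \<zeta> y z = Ymap q R (- T)"
        unfolding T by (auto simp: fun_eq_iff Ymap_def klin_neg[OF kR] scal_apply)
      then have "det3 a y z = Fx \<zeta> q R a (- T)"
        using Phi_Lx_bw2[OF k bj, of a y z] by (simp add: Fx_def)
      then show ?thesis using FT by simp
    qed
    show "a = 0"
    proof
      fix i :: 3
      have "a 0 = 0" using d[of "e3 1" "e3 2"] by (simp add: det3_def e3_def)
      moreover have "a 1 = 0" using d[of "e3 2" "e3 0"] by (simp add: det3_def e3_def)
      moreover have "a 2 = 0" using d[of "e3 0" "e3 1"] by (simp add: det3_def e3_def)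
      ultimately show "a i = 0 i" using exhaust3[of i] by auto
    qed
  qed
  have part2b: "a = 0" if "\<forall>x. ell \<zeta> q R \<omega> x a = (\<lambda>z. 0)" for a
  proof -
    have F0: "Fx \<zeta> q R x (tens2 (\<zeta> a) z) = 0" for x z
      using fun_cong[OF spec[OF that, of x], of z] w0 by (simp add: ellF)
    have "R (tens2 (\<zeta> a) z) = scal q (tens2 (\<zeta> a) z)" for z
      by (rule Y_zero_from_F[OF k bj h ri F0 F0 F0])
    then have "\<zeta> a = 0" by (rule hecke_left[OF h q_nz k bj ri])
    then have "\<zeta> a = \<zeta> 0" using klin_zero[OF k] by simp
    then show "a = 0" using bj by (simp add: bij_is_inj inj_eq)
  qed
  show ?thesis
  proof (intro conjI allI impI)
    fix \<phi> :: "'k vec3 \<Rightarrow> 'k" assume "lin_form \<phi>"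
    then show "\<exists>S c. finite S \<and> \<phi> = (\<lambda>z. \<Sum>p\<in>S. c p * ell \<zeta> q R \<omega> (fst p) (snd p) z)" by (rule part1)
  next
    fix a assume "(\<forall>x. ell \<zeta> q R \<omega> a x = (\<lambda>z. 0)) \<or> (\<forall>x. ell \<zeta> q R \<omega> x a = (\<lambda>z. 0))"
    then show "a = 0"
    proof
      assume "\<forall>x. ell \<zeta> q R \<omega> a x = (\<lambda>z. 0)" then show "a = 0" by (rule part2a)
    next
      assume "\<forall>x. ell \<zeta> q R \<omega> x a = (\<lambda>z. 0)" then show "a = 0" by (rule part2b)
    qed
  qed
qed

end
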